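(* Assume: (i) there is $L_f>0$ with $\|f(w,t)-f(y,t)\|_2\le L_f\|w-y\|_2$ for all $w,y\in\mathbb{R}^{N_s}$, $t\in[0,T]$; (ii) $\Delta t<\sigma_{\min}(A_{LM})/(L_f\sigma_{\max}(B_{LM}))$; (iii) there is $P>0$ with $\|\bar A\,\bar r(w)\|_2\ge P\|\bar r(w)\|_2$ for all $w\in\mathcal{S}$. Let $x\in\mathbb{R}^{N_sN_t}$ satisfy $\bar r(x)=0$ and let $\tilde x\in\arg\min_{w\in\mathcal{S}}\|\bar A\,\bar r(w)\|_2$. Then $$\max_{1\le n\le N_t}\|x^n-\tilde x^n\|_2\le\frac{\sqrt{N_t}}{P}\,\frac{\sigma_{\max}(\bar A A_{LM})+\Delta t L_f\sigma_{\max}(\bar A B_{LM})}{\sigma_{\min}(A_{LM})-\Delta t L_f\sigma_{\max}(B_{LM})}\,\min_{w\in\mathcal{S}}\max_{1\le n\le N_t}\|x^n-w^n\|_2.$$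
   Context: Let $f:\mathbb{R}^{N_s}\times[0,T]\to\mathbb{R}^{N_s}$ be the velocity of the ODE $\dot x=f(x,t)$, $x(0)=x^0\in\mathbb{R}^{N_s}$. Use a uniform time grid $t^n=n\Delta t$, $n=0,\dots,N_t$, $\Delta t=T/N_t$. A linear multistep scheme is given by integers $k(n)\le n$ and coefficients $\alpha_j^n,\beta_j^n\in\mathbb{R}$, $j=0,\dots,k(n)$, $n=1,\dots,N_t$, with $\alpha_0^n\neq0$. For $w=(w^1,\dots,w^{N_t})\in\mathbb{R}^{N_sN_t}$ (blocks $w^n\in\mathbb{R}^{N_s}$) set $w^0:=x^0$ and define the residual at step $n$ by $r^n(w)=\sum_{j=0}^{k(n)}\alpha_j^n w^{n-j}-\Delta t\sum_{j=0}^{k(n)}\beta_j^n f(w^{n-j},t^{n-j})$, and the space–time residual $\bar r(w)=(r^1(w),\dots,r^{N_t}(w))\in\mathbb{R}^{N_sN_t}$. Let $A_{LM},B_{LM}\in\mathbb{R}^{N_sN_t\times N_sN_t}$ be the block lower-triangular matrices (blocks of size $N_s\times N_s$) whose $(n,n-j)$ block is $\alpha_j^n I_{N_s}$, resp. $\beta_j^n I_{N_s}$, for $0\le j\le k(n)$ with $n-j\ge1$, and zero otherwise. $\sigma_{\max}(M)$, $\sigma_{\min}(M)$ denote the largest and smallest singular values of $M$; $\|\cdot\|_2$ is the Euclidean norm on $\mathbb{R}^{N_sN_t}$. The space–time trial subspace is the affine subspace $\mathcal{S}=\{(x^0,\dots,x^0)+\sum_{i=1}^{n_{st}}c_i\pi_i: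 c\in\mathbb{R}^{n_{st}}\}\subseteq\mathbb{R}^{N_sN_t}$ for given vectors $\pi_1,\dots,\pi_{n_{st}}\in\mathbb{R}^{N_sN_t}$; $\bar A\in\mathbb{R}^{\bar z\times N_sN_t}$ is a weighting matrix. *)

theory Defs
  imports "Jordan_Normal_Form.Matrix"
begin

definition vnorm :: "real vec \<Rightarrow> real" where
  "vnorm v = sqrt (\<Sum>i<dim_vec v. (v $ i)^2)"

text \<open>Largest / smallest singular value, via the variational (Courant--Fischer)
  characterisation over unit vectors.  The smallest one is only used for square matrices.\<close>
definition sigma_max :: "real mat \<Rightarrow> real" where
  "sigma_max M = Sup {vnorm (M *\<^sub>v v) | v. dim_vec v = dim_col M \<and> vnorm v = 1}"

definition sigma_min :: "real mat \<Rightarrow> real" where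
  "sigma_min M = Inf {vnorm (M *\<^sub>v v) | v. dim_vec v = dim_col M \<and> vnorm v = 1}"

text \<open>Block n of a space-time vector w (blocks numbered 1..Nt, block 0 is the initial state).\<close>
definition blk :: "nat \<Rightarrow> real vec \<Rightarrow> real vec \<Rightarrow> nat \<Rightarrow> real vec" where
  "blk Ns x0 w n = (if n = 0 then x0 else vec Ns (\<lambda>i. w $ ((n - 1) * Ns + i)))"

definition lm_res ::
  "nat \<Rightarrow> real \<Rightarrow> (real vec \<Rightarrow> real \<Rightarrow> real vec) \<Rightarrow> real vec \<Rightarrow>
   (nat \<Rightarrow> nat) \<Rightarrow> (nat \<Rightarrow> nat \<Rightarrow> real) \<Rightarrow> (nat \<Rightarrow> nat \<Rightarrow> real) \<Rightarrow>
   real vec \<Rightarrow> nat \<Rightarrow> real vec" where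
  "lm_res Ns dt f x0 k \<alpha> \<beta> w n =
     vec Ns (\<lambda>i. (\<Sum>j\<in>{0..k n}. \<alpha> n j * (blk Ns x0 w (n - j) $ i))
               - dt * (\<Sum>j\<in>{0..k n}. \<beta> n j * (f (blk Ns x0 w (n - j)) (real (n - j) * dt) $ i)))"

definition st_res ::
  "nat \<Rightarrow> nat \<Rightarrow> real \<Rightarrow> (real vec \<Rightarrow> real \<Rightarrow> real vec) \<Rightarrow> real vec \<Rightarrow>
   (nat \<Rightarrow> nat) \<Rightarrow> (nat \<Rightarrow> nat \<Rightarrow> real) \<Rightarrow> (nat \<Rightarrow> nat \<Rightarrow> real) \<Rightarrow> real vec \<Rightarrow> real vec" where
  "st_res Ns Nt dt f x0 k \<alpha> \<beta> w =
     vec (Ns * Nt) (\<lambda>p. lm_res Ns dt f x0 k \<alpha> \<beta> w (p div Ns + 1) $ (p mod Ns))"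

text \<open>Block lower-triangular matrix whose (n, n-j) block is c n j * I (0 \<le> j \<le> k n, n-j \<ge> 1).\<close>
definition lm_mat :: "nat \<Rightarrow> nat \<Rightarrow> (nat \<Rightarrow> nat) \<Rightarrow> (nat \<Rightarrow> nat \<Rightarrow> real) \<Rightarrow> real mat" where
  "lm_mat Ns Nt k c = mat (Ns * Nt) (Ns * Nt) (\<lambda>(p, q).
      (let n = p div Ns + 1; m = q div Ns + 1 in
        if p mod Ns = q mod Ns \<and> m \<le> n \<and> n - m \<le> k n then c n (n - m) else 0))"

text \<open>Affine space-time trial subspace (x0,...,x0) + span{pi_1,...,pi_nst}.\<close>
definition trial_space :: "nat \<Rightarrow> nat \<Rightarrow> real vec \<Rightarrow> nat \<Rightarrow> (nat \<Rightarrow> real vec) \<Rightarrow> real vec set" where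
  "trial_space Ns Nt x0 nst \<pi> =
     {w. \<exists>c :: nat \<Rightarrow> real. w = vec (Ns * Nt) (\<lambda>p. x0 $ (p mod Ns) + (\<Sum>i\<in>{1..nst}. c i * (\<pi> i $ p)))}"

end

theory Submission
  imports Defs "HOL-Analysis.L2_Norm"
begin

lemma vnorm_L2: "vnorm v = L2_set (\<lambda>i. v $ i) {..<dim_vec v}"
  unfolding vnorm_def L2_set_def by simp

lemma vnorm_nonneg[simp]: "vnorm v \<ge> 0"
  unfolding vnorm_def by (simp add: sum_nonneg)

lemma vnorm_add: assumes "dim_vec u = dim_vec v" shows "vnorm (u + v) \<le> vnorm u + vnorm v"
proof -
  have "vnorm (u + v) = L2_set (\<lambda>i. u $ i + v $ i) {..<dim_vec v}"
    unfolding vnorm_L2 using assms by (intro L2_set_cong) auto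
  also have "\<dots> \<le> vnorm u + vnorm v" unfolding vnorm_L2 using assms L2_set_triangle_ineq by simp
  finally show ?thesis .
qed

lemma vnorm_smult: "vnorm (a \<cdot>\<^sub>v v) = \<bar>a\<bar> * vnorm v"
proof -
  have "vnorm (a \<cdot>\<^sub>v v) = L2_set (\<lambda>i. \<bar>a\<bar> * v $ i) {..<dim_vec v}"
    unfolding vnorm_def L2_set_def by (simp add: power_mult_distrib)
  also have "\<dots> = \<bar>a\<bar> * vnorm v" unfolding vnorm_L2 by (simp add: L2_set_right_distrib)
  finally show ?thesis .
qed

lemma vnorm_uminus: "vnorm (- v) = vnorm v"
  unfolding vnorm_def by simp

lemma vnorm_minus_le: assumes "dim_vec u = dim_vec v" shows "vnorm (u - v) \<le> vnorm u + vnorm v"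
proof -
  have "u - v = u + (- v)" using assms by auto
  then show ?thesis using vnorm_add[of u "-v"] assms by (simp add: vnorm_uminus)
qed

lemma vnorm_minus_ge: assumes "dim_vec u = dim_vec v" shows "vnorm u - vnorm v \<le> vnorm (u - v)"
proof -
  have "u = (u - v) + v" using assms by auto
  then have "vnorm u \<le> vnorm (u - v) + vnorm v" using vnorm_add[of "u - v" v] assms by simp
  then show ?thesis by simp
qed

lemma vnorm_minus_commute: assumes "dim_vec u = dim_vec v" shows "vnorm (u - v) = vnorm (v - u)"
proof -
  have "v - u = - (u - v)" using assms by auto
  then show ?thesis by (simp add: vnorm_uminus)
qed

lemma vnorm_zero: "vnorm (0\<^sub>v n) = 0" unfolding vnorm_def by simp

lemma vnorm_eq_0: assumes "vnorm v = 0" shows "v = 0\<^sub>v (dim_vec v)"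
proof -
  have "\<forall>i\<in>{..<dim_vec v}. v $ i = 0" using assms unfolding vnorm_L2 by (simp add: L2_set_eq_0_iff)
  then show ?thesis by (intro eq_vecI) auto
qed

lemma mat_vec_frob:
  assumes "dim_vec v = dim_col M"
  shows "vnorm (M *\<^sub>v v) \<le> sqrt (\<Sum>i<dim_row M. \<Sum>j<dim_col M. (M $$ (i,j))^2) * vnorm v"
proof -
  have row: "((M *\<^sub>v v) $ i)^2 \<le> (\<Sum>j<dim_col M. (M $$ (i,j))^2) * (vnorm v)^2" if "i < dim_row M" for i
  proof -
    have "\<bar>(M *\<^sub>v v) $ i\<bar> = \<bar>\<Sum>j<dim_col M. M $$ (i,j) * v $ j\<bar>"
      using that assms by (simp add: scalar_prod_def atLeast0LessThan)
    also have "\<dots> \<le> (\<Sum>j<dim_col M. \<bar>M $$ (i,j)\<bar> * \<bar>v $ j\<bar>)"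
      by (rule order_trans[OF sum_abs]) (simp add: abs_mult)
    also have "\<dots> \<le> L2_set (\<lambda>j. M $$ (i,j)) {..<dim_col M} * L2_set (\<lambda>j. v $ j) {..<dim_col M}"
      by (rule L2_set_mult_ineq)
    finally have "\<bar>(M *\<^sub>v v) $ i\<bar> \<le> L2_set (\<lambda>j. M $$ (i,j)) {..<dim_col M} * vnorm v"
      unfolding vnorm_L2 assms .
    then have "\<bar>(M *\<^sub>v v) $ i\<bar>^2 \<le> (L2_set (\<lambda>j. M $$ (i,j)) {..<dim_col M} * vnorm v)^2"
      by (intro power_mono) auto
    then show ?thesis unfolding L2_set_def by (simp add: power_mult_distrib sum_nonneg)
  qed
  have "(vnorm (M *\<^sub>v v))^2 = (\<Sum>i<dim_row M. ((M *\<^sub>v v) $ i)^2)"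
    unfolding vnorm_def by (simp add: sum_nonneg)
  also have "\<dots> \<le> (\<Sum>i<dim_row M. (\<Sum>j<dim_col M. (M $$ (i,j))^2) * (vnorm v)^2)"
    by (rule sum_mono) (use row in auto)
  also have "\<dots> = (sqrt (\<Sum>i<dim_row M. \<Sum>j<dim_col M. (M $$ (i,j))^2) * vnorm v)^2"
    by (simp add: power_mult_distrib sum_nonneg sum_distrib_right)
  finally have sq: "(vnorm (M *\<^sub>v v))^2 \<le> (sqrt (\<Sum>i<dim_row M. \<Sum>j<dim_col M. (M $$ (i,j))^2) * vnorm v)^2" .
  have nn: "0 \<le> sqrt (\<Sum>i<dim_row M. \<Sum>j<dim_col M. (M $$ (i,j))^2) * vnorm v"
    by (simp add: sum_nonneg)
  show ?thesis using power2_le_imp_le[OF sq nn] .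
qed

lemma vnorm_unit_scale:
  assumes "vnorm v \<noteq> 0"
  shows "vnorm ((1 / vnorm v) \<cdot>\<^sub>v v) = 1"
  using assms by (simp add: vnorm_smult)

lemma sigma_max_bound:
  assumes "dim_vec v = dim_col M"
  shows "vnorm (M *\<^sub>v v) \<le> sigma_max M * vnorm v"
proof (cases "vnorm v = 0")
  case True
  then have "v = 0\<^sub>v (dim_col M)" using vnorm_eq_0 assms by metis
  have "M *\<^sub>v v = 0\<^sub>v (dim_row M)"
    unfolding \<open>v = _\<close> by (rule eq_vecI) (simp_all add: scalar_prod_def)
  then show ?thesis by (simp add: vnorm_zero True)
next
  case False
  define u where "u = (1 / vnorm v) \<cdot>\<^sub>v v"
  have u1: "vnorm u = 1" "dim_vec u = dim_col M" using False assms unfolding u_def by (auto simp: vnorm_smult)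
  have c1: "M \<in> carrier_mat (dim_row M) (dim_col M)" by simp
  have c2: "v \<in> carrier_vec (dim_col M)" by (rule carrier_vecI[OF assms])
  have Mu: "M *\<^sub>v u = (1 / vnorm v) \<cdot>\<^sub>v (M *\<^sub>v v)" unfolding u_def
    by (rule mult_mat_vec[OF c1 c2])
  have bdd: "bdd_above {vnorm (M *\<^sub>v v) | v. dim_vec v = dim_col M \<and> vnorm v = 1}"
  proof (rule bdd_aboveI)
    fix y assume "y \<in> {vnorm (M *\<^sub>v v) | v. dim_vec v = dim_col M \<and> vnorm v = 1}"
    then obtain w where w: "y = vnorm (M *\<^sub>v w)" "dim_vec w = dim_col M" "vnorm w = 1" by blast
    show "y \<le> sqrt (\<Sum>i<dim_row M. \<Sum>j<dim_col M. (M $$ (i,j))^2)"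
      using mat_vec_frob[OF w(2)] w(1,3) by simp
  qed
  have "vnorm (M *\<^sub>v u) \<le> sigma_max M" unfolding sigma_max_def
    by (rule cSup_upper[OF _ bdd]) (use u1 in blast)
  then have "vnorm (M *\<^sub>v v) / vnorm v \<le> sigma_max M" unfolding Mu vnorm_smult
    using vnorm_nonneg[of v] by simp
  moreover have "vnorm v > 0" using False vnorm_nonneg[of v] by linarith
  ultimately show ?thesis by (simp add: pos_divide_le_eq)
qed

lemma sigma_min_bound:
  assumes "dim_vec v = dim_col M"
  shows "sigma_min M * vnorm v \<le> vnorm (M *\<^sub>v v)"
proof (cases "vnorm v = 0")
  case True
  then show ?thesis by simp
next
  case False
  define u where "u = (1 / vnorm v) \<cdot>\<^sub>v v"
  have u1: "vnorm u = 1" "dim_vec u = dim_col M" using False assms unfolding u_def by (auto simp: vnorm_smult)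
  have c1: "M \<in> carrier_mat (dim_row M) (dim_col M)" by simp
  have c2: "v \<in> carrier_vec (dim_col M)" by (rule carrier_vecI[OF assms])
  have Mu: "M *\<^sub>v u = (1 / vnorm v) \<cdot>\<^sub>v (M *\<^sub>v v)" unfolding u_def
    by (rule mult_mat_vec[OF c1 c2])
  have bdd: "bdd_below {vnorm (M *\<^sub>v v) | v. dim_vec v = dim_col M \<and> vnorm v = 1}"
    by (rule bdd_belowI[where m = 0]) auto
  have "sigma_min M \<le> vnorm (M *\<^sub>v u)" unfolding sigma_min_def
    by (rule cInf_lower[OF _ bdd]) (use u1 in blast)
  then have "sigma_min M \<le> vnorm (M *\<^sub>v v) / vnorm v" unfolding Mu vnorm_smult
    using vnorm_nonneg[of v] by simp
  moreover have "vnorm v > 0" using False vnorm_nonneg[of v] by linarith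
  ultimately show ?thesis by (simp add: pos_le_divide_eq)
qed

lemma sigma_max_nonneg:
  assumes "dim_col M > 0"
  shows "sigma_max M \<ge> 0"
proof -
  have "vnorm (unit_vec (dim_col M) 0) = 1"
  proof -
    have e: "(\<Sum>i<n. (if i = 0 then 1 else 0::real)^2) = 1" if "0<n" for n :: nat
    proof -
      have "(\<Sum>i<n. (if i = 0 then 1 else 0::real)^2) = (\<Sum>i<n. if i = 0 then 1 else 0::real)"
        by (rule sum.cong) auto
      also have "\<dots> = 1" using that sum.delta[of "{..<n}" 0 "\<lambda>_. (1::real)"] by simp
      finally show ?thesis .
    qed
    show ?thesis using assms unfolding vnorm_def unit_vec_def by (simp add: e)
  qed
  then have "vnorm (M *\<^sub>v unit_vec (dim_col M) 0) \<le> sigma_max M"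
    using sigma_max_bound[of "unit_vec (dim_col M) 0" M] by simp
  then show ?thesis using vnorm_nonneg order_trans by blast
qed

lemma block_sum:
  fixes g :: "nat \<Rightarrow> real" and Ns Nt :: nat
  shows "(\<Sum>q<Ns*Nt. g q) = (\<Sum>n\<in>{1..Nt}. \<Sum>i<Ns. g ((n-1)*Ns + i))"
proof -
  have 1: "(\<Sum>q<Ns*Nt. g q) = (\<Sum>a<Nt. \<Sum>q\<in>{a*Ns..<a*Ns+Ns}. g q)"
    using sum.nat_group[of g Ns Nt, unfolded mult.commute[of Nt Ns]] by (rule sym)
  have 2: "(\<Sum>q\<in>{a*Ns..<a*Ns+Ns}. g q) = (\<Sum>i<Ns. g (a*Ns+i))" for a
  proof -
    have "{a*Ns..<a*Ns+Ns} = {0 + a*Ns..<Ns + a*Ns}" by (simp add: add.commute)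
    then have "(\<Sum>q\<in>{a*Ns..<a*Ns+Ns}. g q) = (\<Sum>i\<in>{0..<Ns}. g (i + a*Ns))"
      using sum.shift_bounds_nat_ivl[of g 0 "a*Ns" Ns] by simp
    also have "\<dots> = (\<Sum>i<Ns. g (a*Ns+i))"
      unfolding atLeast0LessThan by (intro sum.cong refl) (simp add: add.commute)
    finally show ?thesis .
  qed
  have 3: "(\<Sum>n\<in>{1..Nt}. \<Sum>i<Ns. g ((n-1)*Ns + i)) = (\<Sum>a<Nt. \<Sum>i<Ns. g (a*Ns+i))"
    unfolding One_nat_def sum.atLeast1_atMost_eq by simp
  show ?thesis unfolding 1 2 3 ..
qed

definition bl :: "nat \<Rightarrow> real vec \<Rightarrow> nat \<Rightarrow> real vec" where
  "bl Ns d n = vec Ns (\<lambda>i. d $ ((n-1)*Ns + i))"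

lemma vnorm_sq: "(vnorm v)^2 = (\<Sum>i<dim_vec v. (v $ i)^2)"
  unfolding vnorm_def by (simp add: sum_nonneg)

lemma vnorm_blocks:
  assumes "dim_vec d = Ns*Nt"
  shows "(vnorm d)^2 = (\<Sum>n\<in>{1..Nt}. (vnorm (bl Ns d n))^2)"
  unfolding vnorm_sq assms block_sum[of _ Ns Nt] by (simp add: bl_def)

lemma vnorm_block_le:
  assumes "dim_vec d = Ns*Nt" "n \<in> {1..Nt}"
  shows "vnorm (bl Ns d n) \<le> vnorm d"
proof -
  have "(vnorm (bl Ns d n))^2 \<le> (\<Sum>m\<in>{1..Nt}. (vnorm (bl Ns d m))^2)"
    using assms(2) by (intro member_le_sum) auto
  then have "(vnorm (bl Ns d n))^2 \<le> (vnorm d)^2" using vnorm_blocks[OF assms(1)] by simp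
  then show ?thesis by (rule power2_le_imp_le) simp
qed

lemma vnorm_le_blocks:
  assumes "dim_vec d = Ns*Nt" "Nt \<ge> 1"
  shows "vnorm d \<le> sqrt (real Nt) * Max ((\<lambda>n. vnorm (bl Ns d n)) ` {1..Nt})"
proof -
  define M where "M = Max ((\<lambda>n. vnorm (bl Ns d n)) ` {1..Nt})"
  have le: "vnorm (bl Ns d n) \<le> M" if "n \<in> {1..Nt}" for n
    unfolding M_def by (rule Max_ge) (use that in auto)
  have M0: "M \<ge> 0"
  proof -
    have "vnorm (bl Ns d 1) \<le> M" using assms(2) by (intro le) simp
    then show ?thesis using vnorm_nonneg[of "bl Ns d 1"] by linarith
  qed
  have "(vnorm d)^2 = (\<Sum>n\<in>{1..Nt}. (vnorm (bl Ns d n))^2)" by (rule vnorm_blocks[OF assms(1)])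
  also have "\<dots> \<le> (\<Sum>n\<in>{1..Nt}. M^2)"
  proof (rule sum_mono)
    fix n assume "n \<in> {1..Nt}"
    then show "(vnorm (bl Ns d n))^2 \<le> M^2" using le[of n] vnorm_nonneg[of "bl Ns d n"] by (intro power_mono) auto
  qed
  also have "\<dots> = real Nt * M^2" by simp
  also have "\<dots> = (sqrt (real Nt) * M)^2" by (simp add: power_mult_distrib)
  finally have "(vnorm d)^2 \<le> (sqrt (real Nt) * M)^2" .
  moreover have "0 \<le> sqrt (real Nt) * M" using M0 by simp
  ultimately show ?thesis unfolding M_def[symmetric] by (rule power2_le_imp_le)
qed


lemma divmod_helper:
  fixes x i Ns :: nat
  assumes "i < Ns"
  shows "(x*Ns + i) div Ns = x" "(x*Ns + i) mod Ns = i"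
  using assms by auto

lemma lm_mat_dims[simp]: "dim_row (lm_mat Ns Nt k c) = Ns*Nt" "dim_col (lm_mat Ns Nt k c) = Ns*Nt"
  unfolding lm_mat_def by simp_all

lemma lm_mat_mult:
  assumes Ns: "Ns > 0" and p: "p < Ns*Nt" and d: "dim_vec d = Ns*Nt"
  shows "(lm_mat Ns Nt k c *\<^sub>v d) $ p =
    (\<Sum>j\<in>{0..k (p div Ns + 1)}. if j \<le> p div Ns then c (p div Ns + 1) j * d $ ((p div Ns - j)*Ns + p mod Ns) else 0)"
proof -
  define a where "a = p div Ns"
  define i where "i = p mod Ns"
  define n where "n = a + 1"
  have i_lt: "i < Ns" unfolding i_def using Ns by simp
  have p_eq: "p = a*Ns + i" unfolding a_def i_def by simp
  define S where "S = {q\<in>{0..<Ns*Nt}. q mod Ns = i \<and> q div Ns \<le> a \<and> a - q div Ns \<le> k n}"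
  define T where "T = {j\<in>{0..k n}. j \<le> a}"
  have entry: "lm_mat Ns Nt k c $$ (p, q) =
      (if q mod Ns = i \<and> q div Ns \<le> a \<and> a - q div Ns \<le> k n then c n (a - q div Ns) else 0)"
    if "q < Ns*Nt" for q
    using that p unfolding lm_mat_def a_def i_def n_def by (simp add: Let_def)
  have "(lm_mat Ns Nt k c *\<^sub>v d) $ p = (\<Sum>q\<in>{0..<Ns*Nt}. row (lm_mat Ns Nt k c) p $ q * d $ q)"
    using p d by (simp add: scalar_prod_def)
  also have "\<dots> = (\<Sum>q\<in>{0..<Ns*Nt}. if q mod Ns = i \<and> q div Ns \<le> a \<and> a - q div Ns \<le> k n
                      then c n (a - q div Ns) * d $ q else 0)"
  proof (rule sum.cong[OF refl])
    fix q assume "q \<in> {0..<Ns*Nt}"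
    then have q: "q < Ns*Nt" by simp
    have "row (lm_mat Ns Nt k c) p $ q = lm_mat Ns Nt k c $$ (p, q)" using q p by simp
    then show "row (lm_mat Ns Nt k c) p $ q * d $ q = (if q mod Ns = i \<and> q div Ns \<le> a \<and> a - q div Ns \<le> k n
                      then c n (a - q div Ns) * d $ q else 0)"
      using entry[OF q] by simp
  qed
  also have "\<dots> = (\<Sum>q\<in>S. c n (a - q div Ns) * d $ q)"
    unfolding S_def by (rule sum.inter_filter[symmetric]) simp
  also have "\<dots> = (\<Sum>j\<in>T. c n j * d $ ((a - j)*Ns + i))"
  proof (rule sum.reindex_bij_witness[where i = "\<lambda>j. (a - j)*Ns + i" and j = "\<lambda>q. a - q div Ns"])
    fix q assume q: "q \<in> S"
    then have q1: "q mod Ns = i" "q div Ns \<le> a" "a - q div Ns \<le> k n" unfolding S_def by auto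
    have "(a - (a - q div Ns)) * Ns + i = (q div Ns) * Ns + q mod Ns" using q1 by simp
    also have "\<dots> = q" by simp
    finally show "(a - (a - q div Ns)) * Ns + i = q" .
    then show "c n (a - q div Ns) * d $ ((a - (a - q div Ns)) * Ns + i) = c n (a - q div Ns) * d $ q"
      by simp
    show "a - q div Ns \<in> T" unfolding T_def using q1 by simp
  next
    fix j assume j: "j \<in> T"
    then have j1: "j \<le> k n" "j \<le> a" unfolding T_def by auto
    have dv: "((a - j)*Ns + i) div Ns = a - j" "((a - j)*Ns + i) mod Ns = i"
      using divmod_helper[OF i_lt] by auto
    show "a - ((a - j)*Ns + i) div Ns = j" using dv j1 by simp
    have "(a - j)*Ns + i \<le> a*Ns + i" by simp
    then have "(a - j)*Ns + i < Ns*Nt" using p p_eq by linarith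
    then show "(a - j)*Ns + i \<in> S" unfolding S_def using dv j1 by simp
  qed
  also have "\<dots> = (\<Sum>j\<in>{0..k n}. if j \<le> a then c n j * d $ ((a - j)*Ns + i) else 0)"
    unfolding T_def by (rule sum.inter_filter) simp
  finally show ?thesis unfolding a_def i_def n_def .
qed


definition FF :: "nat \<Rightarrow> nat \<Rightarrow> real \<Rightarrow> (real vec \<Rightarrow> real \<Rightarrow> real vec) \<Rightarrow> real vec \<Rightarrow> real vec \<Rightarrow> real vec" where
  "FF Ns Nt dt f x0 w = vec (Ns*Nt) (\<lambda>q. f (blk Ns x0 w (q div Ns + 1)) (real (q div Ns + 1) * dt) $ (q mod Ns))"

lemma res_diff:
  assumes Ns: "Ns > 0" and p: "p < Ns*Nt" and w: "dim_vec w = Ns*Nt" and x: "dim_vec x = Ns*Nt"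
  shows "st_res Ns Nt dt f x0 k \<alpha> \<beta> w $ p - st_res Ns Nt dt f x0 k \<alpha> \<beta> x $ p
    = (lm_mat Ns Nt k \<alpha> *\<^sub>v (w - x)) $ p - dt * (lm_mat Ns Nt k \<beta> *\<^sub>v (FF Ns Nt dt f x0 w - FF Ns Nt dt f x0 x)) $ p"
proof -
  define a where "a = p div Ns"
  define i where "i = p mod Ns"
  have i_lt: "i < Ns" unfolding i_def using Ns by simp
  have p_eq: "p = a*Ns + i" unfolding a_def i_def by simp
  define J where "J = {0..k (a+1)}"
  define bw where "bw j = blk Ns x0 w (a + 1 - j) $ i" for j
  define bx where "bx j = blk Ns x0 x (a + 1 - j) $ i" for j
  define fw where "fw j = f (blk Ns x0 w (a + 1 - j)) (real (a + 1 - j) * dt) $ i" for j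
  define fx where "fx j = f (blk Ns x0 x (a + 1 - j)) (real (a + 1 - j) * dt) $ i" for j
  have sw: "st_res Ns Nt dt f x0 k \<alpha> \<beta> w $ p = (\<Sum>j\<in>J. \<alpha> (a+1) j * bw j) - dt * (\<Sum>j\<in>J. \<beta> (a+1) j * fw j)"
    unfolding st_res_def lm_res_def J_def bw_def fw_def using p i_lt by (simp add: a_def i_def)
  have sx: "st_res Ns Nt dt f x0 k \<alpha> \<beta> x $ p = (\<Sum>j\<in>J. \<alpha> (a+1) j * bx j) - dt * (\<Sum>j\<in>J. \<beta> (a+1) j * fx j)"
    unfolding st_res_def lm_res_def J_def bx_def fx_def using p i_lt by (simp add: a_def i_def)
  have q_lt: "(a - j)*Ns + i < Ns*Nt" for j
  proof -
    have "(a - j)*Ns + i \<le> a*Ns + i" by simp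
    then show ?thesis using p p_eq by linarith
  qed
  have dv: "((a - j)*Ns + i) div Ns = a - j" "((a - j)*Ns + i) mod Ns = i" for j
    using divmod_helper[OF i_lt] by auto
  have dimd: "dim_vec (w - x) = Ns*Nt" using x by simp
  have dimF: "dim_vec (FF Ns Nt dt f x0 w - FF Ns Nt dt f x0 x) = Ns*Nt" by (simp add: FF_def)
  have A: "(lm_mat Ns Nt k \<alpha> *\<^sub>v (w - x)) $ p = (\<Sum>j\<in>J. \<alpha> (a+1) j * (bw j - bx j))"
    unfolding lm_mat_mult[OF Ns p dimd] a_def[symmetric] i_def[symmetric] J_def
  proof (rule sum.cong[OF refl])
    fix j assume "j \<in> {0..k (a+1)}"
    show "(if j \<le> a then \<alpha> (a + 1) j * (w - x) $ ((a - j) * Ns + i) else 0) = \<alpha> (a + 1) j * (bw j - bx j)"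
    proof (cases "j \<le> a")
      case True
      then have e: "a + 1 - j - 1 = a - j" "a + 1 - j \<noteq> 0" by auto
      have "bw j = w $ ((a - j)*Ns + i)" unfolding bw_def blk_def using e i_lt by simp
      moreover have "bx j = x $ ((a - j)*Ns + i)" unfolding bx_def blk_def using e i_lt by simp
      moreover have "(w - x) $ ((a - j)*Ns + i) = w $ ((a - j)*Ns + i) - x $ ((a - j)*Ns + i)"
        using q_lt[of j] x by simp
      ultimately show ?thesis using True by simp
    next
      case False
      then have "a + 1 - j = 0" by simp
      then show ?thesis using False unfolding bw_def bx_def blk_def by simp
    qed
  qed
  have B: "(lm_mat Ns Nt k \<beta> *\<^sub>v (FF Ns Nt dt f x0 w - FF Ns Nt dt f x0 x)) $ p = (\<Sum>j\<in>J. \<beta> (a+1) j * (fw j - fx j))"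
    unfolding lm_mat_mult[OF Ns p dimF] a_def[symmetric] i_def[symmetric] J_def
  proof (rule sum.cong[OF refl])
    fix j assume "j \<in> {0..k (a+1)}"
    show "(if j \<le> a then \<beta> (a + 1) j * (FF Ns Nt dt f x0 w - FF Ns Nt dt f x0 x) $ ((a - j) * Ns + i) else 0) = \<beta> (a + 1) j * (fw j - fx j)"
    proof (cases "j \<le> a")
      case True
      then have e: "a - j + 1 = a + 1 - j" by auto
      have "(FF Ns Nt dt f x0 w - FF Ns Nt dt f x0 x) $ ((a - j)*Ns + i) = fw j - fx j"
        using q_lt[of j] unfolding FF_def fw_def fx_def using True i_lt by (simp add: dv Suc_diff_le)
      then show ?thesis using True by simp
    next
      case False
      then have "a + 1 - j = 0" by simp
      then show ?thesis using False unfolding fw_def fx_def blk_def by simp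
    qed
  qed
  show ?thesis unfolding sw sx A B by (simp add: right_diff_distrib sum_subtractf algebra_simps)
qed


lemma idx_lt:
  fixes Ns Nt n i :: nat
  assumes "i < Ns" "1 \<le> n" "n \<le> Nt"
  shows "(n-1)*Ns + i < Ns*Nt"
proof -
  have "(n-1)*Ns + Ns = n*Ns" using assms(2) by (cases n) auto
  moreover have "n*Ns \<le> Nt*Ns" using assms(3) by (rule mult_le_mono1)
  moreover have "Nt*Ns = Ns*Nt" by (rule mult.commute)
  ultimately show ?thesis using assms(1) by linarith
qed

lemma dim_blk: "dim_vec x0 = Ns \<Longrightarrow> dim_vec (blk Ns x0 w n) = Ns"
  unfolding blk_def by simp

lemma bl_minus_blk:
  assumes w: "dim_vec w = Ns*Nt" and x: "dim_vec x = Ns*Nt" and n: "n \<in> {1..Nt}"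
  shows "bl Ns (w - x) n = blk Ns x0 w n - blk Ns x0 x n"
proof (rule eq_vecI)
  have n0: "n \<noteq> 0" using n by simp
  show "dim_vec (bl Ns (w - x) n) = dim_vec (blk Ns x0 w n - blk Ns x0 x n)"
    unfolding bl_def blk_def using n0 by simp
  fix i assume "i < dim_vec (blk Ns x0 w n - blk Ns x0 x n)"
  then have i: "i < Ns" unfolding blk_def using n0 by simp
  have q: "(n-1)*Ns + i < Ns*Nt" using idx_lt[OF i] n by simp
  show "bl Ns (w - x) n $ i = (blk Ns x0 w n - blk Ns x0 x n) $ i"
    unfolding bl_def blk_def using n0 i q x by simp
qed

lemma FF_lip:
  assumes Ns: "Ns > 0" and Nt: "Nt \<ge> 1" and T: "T > 0" and dt: "dt = T / real Nt"
    and x0d: "dim_vec x0 = Ns"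
    and f_dim: "\<And>w t. dim_vec w = Ns \<Longrightarrow> t \<in> {0..T} \<Longrightarrow> dim_vec (f w t) = Ns"
    and Lf: "Lf > 0"
    and lipschitz: "\<And>w y t. dim_vec w = Ns \<Longrightarrow> dim_vec y = Ns \<Longrightarrow> t \<in> {0..T} \<Longrightarrow>
                      vnorm (f w t - f y t) \<le> Lf * vnorm (w - y)"
    and w: "dim_vec w = Ns*Nt" and x: "dim_vec x = Ns*Nt"
  shows "vnorm (FF Ns Nt dt f x0 w - FF Ns Nt dt f x0 x) \<le> Lf * vnorm (w - x)"
proof -
  let ?D = "FF Ns Nt dt f x0 w - FF Ns Nt dt f x0 x"
  have dimD: "dim_vec ?D = Ns*Nt" by (simp add: FF_def)
  have dimd: "dim_vec (w - x) = Ns*Nt" using x by simp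
  have tT: "real n * dt \<in> {0..T}" if "n \<in> {1..Nt}" for n
  proof -
    have "real n \<le> real Nt" using that by simp
    then have "real n * T \<le> real Nt * T" using T by (intro mult_right_mono) auto
    then have "real n * T / real Nt \<le> T" using Nt by (simp add: divide_le_eq mult.commute)
    then show ?thesis unfolding dt using T by simp
  qed
  have blD: "bl Ns ?D n = f (blk Ns x0 w n) (real n * dt) - f (blk Ns x0 x n) (real n * dt)"
    if n: "n \<in> {1..Nt}" for n
  proof (rule eq_vecI)
    have n0: "n \<noteq> 0" using n by simp
    have d1: "dim_vec (f (blk Ns x0 w n) (real n * dt)) = Ns" "dim_vec (f (blk Ns x0 x n) (real n * dt)) = Ns"
      using f_dim[OF dim_blk[OF x0d] tT[OF n]] by auto
    show "dim_vec (bl Ns ?D n) = dim_vec (f (blk Ns x0 w n) (real n * dt) - f (blk Ns x0 x n) (real n * dt))"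
      unfolding bl_def using d1 by simp
    fix i assume "i < dim_vec (f (blk Ns x0 w n) (real n * dt) - f (blk Ns x0 x n) (real n * dt))"
    then have i: "i < Ns" using d1 by simp
    have q: "(n-1)*Ns + i < Ns*Nt" using idx_lt[OF i] n by simp
    have dv: "((n-1)*Ns + i) div Ns + 1 = n" "((n-1)*Ns + i) mod Ns = i"
      using divmod_helper[OF i, of "n-1"] n0 by auto
    show "bl Ns ?D n $ i = (f (blk Ns x0 w n) (real n * dt) - f (blk Ns x0 x n) (real n * dt)) $ i"
    proof -
      have Fw: "FF Ns Nt dt f x0 w $ ((n-1)*Ns+i) = f (blk Ns x0 w n) (real n * dt) $ i"
        unfolding FF_def using q by (simp only: index_vec dv)
      have Fx: "FF Ns Nt dt f x0 x $ ((n-1)*Ns+i) = f (blk Ns x0 x n) (real n * dt) $ i"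
        unfolding FF_def using q by (simp only: index_vec dv)
      have "bl Ns ?D n $ i = ?D $ ((n-1)*Ns+i)" unfolding bl_def using i by simp
      also have "\<dots> = FF Ns Nt dt f x0 w $ ((n-1)*Ns+i) - FF Ns Nt dt f x0 x $ ((n-1)*Ns+i)"
        using q by (simp add: FF_def)
      finally show ?thesis unfolding Fw Fx using i d1 by simp
    qed
  qed
  have "(vnorm ?D)^2 = (\<Sum>n\<in>{1..Nt}. (vnorm (bl Ns ?D n))^2)" by (rule vnorm_blocks[OF dimD])
  also have "\<dots> \<le> (\<Sum>n\<in>{1..Nt}. (Lf * vnorm (bl Ns (w - x) n))^2)"
  proof (rule sum_mono)
    fix n assume n: "n \<in> {1..Nt}"
    have "vnorm (bl Ns ?D n) \<le> Lf * vnorm (blk Ns x0 w n - blk Ns x0 x n)"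
      unfolding blD[OF n] by (rule lipschitz[OF dim_blk[OF x0d] dim_blk[OF x0d] tT[OF n]])
    then have "vnorm (bl Ns ?D n) \<le> Lf * vnorm (bl Ns (w - x) n)"
      using bl_minus_blk[OF w x n, of x0] by simp
    then show "(vnorm (bl Ns ?D n))^2 \<le> (Lf * vnorm (bl Ns (w - x) n))^2"
      by (intro power_mono) auto
  qed
  also have "\<dots> = Lf^2 * (\<Sum>n\<in>{1..Nt}. (vnorm (bl Ns (w - x) n))^2)"
    by (simp add: power_mult_distrib sum_distrib_left)
  also have "\<dots> = (Lf * vnorm (w - x))^2"
    unfolding vnorm_blocks[OF dimd, symmetric] by (simp add: power_mult_distrib)
  finally have "(vnorm ?D)^2 \<le> (Lf * vnorm (w - x))^2" .
  moreover have "0 \<le> Lf * vnorm (w - x)" using Lf by simp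
  ultimately show ?thesis by (rule power2_le_imp_le)
qed


theorem mainTheorem4:
  fixes Ns Nt nst :: nat and T Lf P :: real
    and f :: "real vec \<Rightarrow> real \<Rightarrow> real vec" and x0 :: "real vec"
    and k :: "nat \<Rightarrow> nat" and \<alpha> \<beta> :: "nat \<Rightarrow> nat \<Rightarrow> real"
    and \<pi> :: "nat \<Rightarrow> real vec" and Abar :: "real mat"
    and x xt :: "real vec"
  defines "dt \<equiv> T / real Nt"
  assumes Ns_pos: "Ns \<ge> 1" and Nt_pos: "Nt \<ge> 1" and T_pos: "T > 0"
    and x0_dim: "dim_vec x0 = Ns"
    and f_dim: "\<And>w t. dim_vec w = Ns \<Longrightarrow> t \<in> {0..T} \<Longrightarrow> dim_vec (f w t) = Ns"
    and scheme: "\<And>n. n \<in> {1..Nt} \<Longrightarrow> k n \<le> n \<and> \<alpha> n 0 \<noteq> 0"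
    and pi_dim: "\<And>i. i \<in> {1..nst} \<Longrightarrow> dim_vec (\<pi> i) = Ns * Nt"
    and Abar_dim: "dim_col Abar = Ns * Nt"
    and Lf_pos: "Lf > 0"
    and lipschitz: "\<And>w y t. dim_vec w = Ns \<Longrightarrow> dim_vec y = Ns \<Longrightarrow> t \<in> {0..T} \<Longrightarrow>
                      vnorm (f w t - f y t) \<le> Lf * vnorm (w - y)"
    and dt_small: "dt * Lf * sigma_max (lm_mat Ns Nt k \<beta>) < sigma_min (lm_mat Ns Nt k \<alpha>)"
    and P_pos: "P > 0"
    and stab: "\<And>w. w \<in> trial_space Ns Nt x0 nst \<pi> \<Longrightarrow>
                 vnorm (Abar *\<^sub>v st_res Ns Nt dt f x0 k \<alpha> \<beta> w) \<ge> P * vnorm (st_res Ns Nt dt f x0 k \<alpha> \<beta> w)"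
    and x_dim: "dim_vec x = Ns * Nt"
    and x_sol: "st_res Ns Nt dt f x0 k \<alpha> \<beta> x = 0\<^sub>v (Ns * Nt)"
    and xt_in: "xt \<in> trial_space Ns Nt x0 nst \<pi>"
    and xt_min: "\<And>w. w \<in> trial_space Ns Nt x0 nst \<pi> \<Longrightarrow>
                   vnorm (Abar *\<^sub>v st_res Ns Nt dt f x0 k \<alpha> \<beta> xt)
                   \<le> vnorm (Abar *\<^sub>v st_res Ns Nt dt f x0 k \<alpha> \<beta> w)"
  shows "Max ((\<lambda>n. vnorm (blk Ns x0 x n - blk Ns x0 xt n)) ` {1..Nt})
         \<le> sqrt (real Nt) / P
           * ((sigma_max (Abar * lm_mat Ns Nt k \<alpha>) + dt * Lf * sigma_max (Abar * lm_mat Ns Nt k \<beta>))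
              / (sigma_min (lm_mat Ns Nt k \<alpha>) - dt * Lf * sigma_max (lm_mat Ns Nt k \<beta>)))
           * (INF w\<in>trial_space Ns Nt x0 nst \<pi>.
                Max ((\<lambda>n. vnorm (blk Ns x0 x n - blk Ns x0 w n)) ` {1..Nt}))"
proof -
  let ?N = "Ns*Nt"
  let ?A = "lm_mat Ns Nt k \<alpha>"
  let ?B = "lm_mat Ns Nt k \<beta>"
  let ?R = "st_res Ns Nt dt f x0 k \<alpha> \<beta>"
  let ?F = "FF Ns Nt dt f x0"
  let ?S = "trial_space Ns Nt x0 nst \<pi>"
  define num where "num = sigma_max (Abar * ?A) + dt * Lf * sigma_max (Abar * ?B)"
  define den where "den = sigma_min ?A - dt * Lf * sigma_max ?B"
  define g where "g w = Max ((\<lambda>n. vnorm (blk Ns x0 x n - blk Ns x0 w n)) ` {1..Nt})" for w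
  define K where "K = sqrt (real Nt) / P * (num / den)"
  have Ns: "Ns > 0" using Ns_pos by simp
  have Npos: "?N > 0" using Ns_pos Nt_pos by simp
  have dt0: "dt \<ge> 0" unfolding dt_def using T_pos by simp
  have den_pos: "den > 0" unfolding den_def using dt_small by simp
  have dimS: "dim_vec w = ?N" if "w \<in> ?S" for w
    using that unfolding trial_space_def by auto
  have dimR: "dim_vec (?R w) = ?N" for w unfolding st_res_def by simp
  have dimF: "dim_vec (?F w) = ?N" for w unfolding FF_def by simp
  have smA: "sigma_max (Abar * ?A) \<ge> 0" by (rule sigma_max_nonneg) (use Npos in simp)
  have smB: "sigma_max (Abar * ?B) \<ge> 0" by (rule sigma_max_nonneg) (use Npos in simp)
  have smB': "sigma_max ?B \<ge> 0" by (rule sigma_max_nonneg) (use Npos in simp)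
  have num0: "num \<ge> 0" unfolding num_def using smA smB dt0 Lf_pos by simp
  have K0: "K \<ge> 0" unfolding K_def using num0 den_pos P_pos by simp
  have key: "?R w = ?A *\<^sub>v (w - x) - dt \<cdot>\<^sub>v (?B *\<^sub>v (?F w - ?F x))" if w: "dim_vec w = ?N" for w
  proof (rule eq_vecI)
    show "dim_vec (?R w) = dim_vec (?A *\<^sub>v (w - x) - dt \<cdot>\<^sub>v (?B *\<^sub>v (?F w - ?F x)))"
      unfolding dimR by simp
    fix p assume "p < dim_vec (?A *\<^sub>v (w - x) - dt \<cdot>\<^sub>v (?B *\<^sub>v (?F w - ?F x)))"
    then have p: "p < ?N" by simp
    have "?R w $ p = ?R w $ p - ?R x $ p" using x_sol p by simp
    also have "\<dots> = (?A *\<^sub>v (w - x)) $ p - dt * (?B *\<^sub>v (?F w - ?F x)) $ p"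
      by (rule res_diff[OF Ns p w x_dim])
    also have "\<dots> = (?A *\<^sub>v (w - x) - dt \<cdot>\<^sub>v (?B *\<^sub>v (?F w - ?F x))) $ p"
      using p by simp
    finally show "?R w $ p = (?A *\<^sub>v (w - x) - dt \<cdot>\<^sub>v (?B *\<^sub>v (?F w - ?F x))) $ p" .
  qed
  have Flip: "vnorm (?F w - ?F x) \<le> Lf * vnorm (w - x)" if w: "dim_vec w = ?N" for w
    by (rule FF_lip[OF Ns Nt_pos T_pos meta_eq_to_obj_eq[OF dt_def] x0_dim f_dim Lf_pos lipschitz w x_dim])
  have upper: "vnorm (Abar *\<^sub>v ?R w) \<le> num * vnorm (w - x)" if w: "dim_vec w = ?N" for w
  proof -
    have cA: "Abar \<in> carrier_mat (dim_row Abar) ?N" by (rule carrier_matI[OF refl Abar_dim])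
    have cLA: "?A \<in> carrier_mat ?N ?N" by (rule carrier_matI) (simp_all only: lm_mat_dims)
    have cLB: "?B \<in> carrier_mat ?N ?N" by (rule carrier_matI) (simp_all only: lm_mat_dims)
    have cd: "w - x \<in> carrier_vec ?N" by (rule carrier_vecI) (simp only: index_minus_vec(2) x_dim)
    have cFd: "?F w - ?F x \<in> carrier_vec ?N" by (rule carrier_vecI) (simp only: index_minus_vec(2) dimF)
    have c1: "?A *\<^sub>v (w - x) \<in> carrier_vec ?N" by (rule carrier_vecI) (simp only: dim_mult_mat_vec lm_mat_dims)
    have c2: "dt \<cdot>\<^sub>v (?B *\<^sub>v (?F w - ?F x)) \<in> carrier_vec ?N" by (rule carrier_vecI) (simp only: index_smult_vec(2) dim_mult_mat_vec lm_mat_dims)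
    have c3: "?B *\<^sub>v (?F w - ?F x) \<in> carrier_vec ?N" by (rule carrier_vecI) (simp only: dim_mult_mat_vec lm_mat_dims)
    have "Abar *\<^sub>v ?R w = Abar *\<^sub>v (?A *\<^sub>v (w - x)) - Abar *\<^sub>v (dt \<cdot>\<^sub>v (?B *\<^sub>v (?F w - ?F x)))"
      unfolding key[OF w] by (rule mult_minus_distrib_mat_vec[OF cA c1 c2])
    also have "\<dots> = (Abar * ?A) *\<^sub>v (w - x) - dt \<cdot>\<^sub>v ((Abar * ?B) *\<^sub>v (?F w - ?F x))"
      unfolding mult_mat_vec[OF cA c3] assoc_mult_mat_vec[OF cA cLA cd] assoc_mult_mat_vec[OF cA cLB cFd] ..
    finally have e: "Abar *\<^sub>v ?R w = (Abar * ?A) *\<^sub>v (w - x) - dt \<cdot>\<^sub>v ((Abar * ?B) *\<^sub>v (?F w - ?F x))" .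
    have "vnorm (Abar *\<^sub>v ?R w) \<le> vnorm ((Abar * ?A) *\<^sub>v (w - x)) + vnorm (dt \<cdot>\<^sub>v ((Abar * ?B) *\<^sub>v (?F w - ?F x)))"
      unfolding e by (rule vnorm_minus_le) simp
    also have "\<dots> = vnorm ((Abar * ?A) *\<^sub>v (w - x)) + dt * vnorm ((Abar * ?B) *\<^sub>v (?F w - ?F x))"
      using dt0 by (simp add: vnorm_smult)
    also have "\<dots> \<le> sigma_max (Abar * ?A) * vnorm (w - x) + dt * (sigma_max (Abar * ?B) * vnorm (?F w - ?F x))"
    proof (intro add_mono mult_left_mono dt0)
      show "vnorm ((Abar * ?A) *\<^sub>v (w - x)) \<le> sigma_max (Abar * ?A) * vnorm (w - x)"
        by (rule sigma_max_bound) (simp only: index_minus_vec(2) x_dim index_mult_mat(3) lm_mat_dims)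
      show "vnorm ((Abar * ?B) *\<^sub>v (?F w - ?F x)) \<le> sigma_max (Abar * ?B) * vnorm (?F w - ?F x)"
        by (rule sigma_max_bound) (simp only: index_minus_vec(2) dimF index_mult_mat(3) lm_mat_dims)
    qed
    also have "\<dots> \<le> sigma_max (Abar * ?A) * vnorm (w - x) + dt * (sigma_max (Abar * ?B) * (Lf * vnorm (w - x)))"
      using Flip[OF w] smB dt0 by (intro add_left_mono mult_left_mono) auto
    also have "\<dots> = num * vnorm (w - x)" unfolding num_def by (simp add: algebra_simps)
    finally show ?thesis .
  qed
  have lower: "den * vnorm (w - x) \<le> vnorm (?R w)" if w: "dim_vec w = ?N" for w
  proof -
    have "sigma_min ?A * vnorm (w - x) - dt * (sigma_max ?B * (Lf * vnorm (w - x)))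
        \<le> vnorm (?A *\<^sub>v (w - x)) - dt * vnorm (?B *\<^sub>v (?F w - ?F x))"
    proof (rule diff_mono)
      show "sigma_min ?A * vnorm (w - x) \<le> vnorm (?A *\<^sub>v (w - x))"
        by (rule sigma_min_bound) (simp add: x_dim)
      have "vnorm (?B *\<^sub>v (?F w - ?F x)) \<le> sigma_max ?B * vnorm (?F w - ?F x)"
        by (rule sigma_max_bound) (simp add: dimF)
      also have "\<dots> \<le> sigma_max ?B * (Lf * vnorm (w - x))"
        by (rule mult_left_mono[OF Flip[OF w] smB'])
      finally show "dt * vnorm (?B *\<^sub>v (?F w - ?F x)) \<le> dt * (sigma_max ?B * (Lf * vnorm (w - x)))"
        using dt0 by (rule mult_left_mono)
    qed
    also have "\<dots> = vnorm (?A *\<^sub>v (w - x)) - vnorm (dt \<cdot>\<^sub>v (?B *\<^sub>v (?F w - ?F x)))"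
      using dt0 by (simp add: vnorm_smult)
    also have "\<dots> \<le> vnorm (?R w)"
      unfolding key[OF w] by (rule vnorm_minus_ge) simp
    finally show ?thesis unfolding den_def by (simp add: algebra_simps)
  qed
  have gblk: "g w = Max ((\<lambda>n. vnorm (bl Ns (x - w) n)) ` {1..Nt})" if w: "dim_vec w = ?N" for w
    unfolding g_def using bl_minus_blk[OF x_dim w] by (intro arg_cong[where f = Max] image_cong) auto
  have xt_dim: "dim_vec xt = ?N" by (rule dimS[OF xt_in])
  have LHS_le: "g xt \<le> vnorm (x - xt)"
    unfolding gblk[OF xt_dim]
  proof (rule Max.boundedI)
    show "finite ((\<lambda>n. vnorm (bl Ns (x - xt) n)) ` {1..Nt})" by simp
    show "(\<lambda>n. vnorm (bl Ns (x - xt) n)) ` {1..Nt} \<noteq> {}" using Nt_pos by simp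
    fix y assume "y \<in> (\<lambda>n. vnorm (bl Ns (x - xt) n)) ` {1..Nt}"
    then obtain n where n: "n \<in> {1..Nt}" "y = vnorm (bl Ns (x - xt) n)" by blast
    show "y \<le> vnorm (x - xt)" unfolding n(2) by (rule vnorm_block_le[OF _ n(1)]) (simp only: index_minus_vec(2) xt_dim)
  qed
  have main: "g xt \<le> K * g w" if wS: "w \<in> ?S" for w
  proof -
    have w: "dim_vec w = ?N" by (rule dimS[OF wS])
    have "P * (den * vnorm (xt - x)) \<le> P * vnorm (?R xt)"
      using lower[OF xt_dim] P_pos by simp
    also have "\<dots> \<le> vnorm (Abar *\<^sub>v ?R xt)" by (rule stab[OF xt_in])
    also have "\<dots> \<le> vnorm (Abar *\<^sub>v ?R w)" by (rule xt_min[OF wS])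
    also have "\<dots> \<le> num * vnorm (w - x)" by (rule upper[OF w])
    also have "\<dots> \<le> num * (sqrt (real Nt) * g w)"
    proof (rule mult_left_mono[OF _ num0])
      have "vnorm (w - x) = vnorm (x - w)" by (rule vnorm_minus_commute) (simp add: w x_dim)
      also have "\<dots> \<le> sqrt (real Nt) * Max ((\<lambda>n. vnorm (bl Ns (x - w) n)) ` {1..Nt})"
        by (rule vnorm_le_blocks[OF _ Nt_pos]) (simp only: index_minus_vec(2) w)
      finally show "vnorm (w - x) \<le> sqrt (real Nt) * g w" unfolding gblk[OF w] .
    qed
    finally have h: "(P * den) * vnorm (xt - x) \<le> num * (sqrt (real Nt) * g w)" by (simp add: mult.assoc)
    have Pd: "P * den > 0" using P_pos den_pos by simp
    have "vnorm (xt - x) \<le> num * (sqrt (real Nt) * g w) / (P * den)"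
      using h Pd by (simp add: pos_le_divide_eq mult.commute)
    also have "\<dots> = K * g w" unfolding K_def by (simp add: field_simps)
    finally have "vnorm (xt - x) \<le> K * g w" .
    moreover have "vnorm (x - xt) = vnorm (xt - x)" by (rule vnorm_minus_commute) (simp add: xt_dim x_dim)
    ultimately show ?thesis using LHS_le by simp
  qed
  have ne: "?S \<noteq> {}" using xt_in by blast
  have "g xt \<le> K * (INF w\<in>?S. g w)"
  proof (cases "K = 0")
    case True
    then show ?thesis using main[OF xt_in] by simp
  next
    case False
    then have Kp: "K > 0" using K0 by simp
    have "g xt / K \<le> (INF w\<in>?S. g w)"
    proof (rule cINF_greatest[OF ne])
      fix w assume "w \<in> ?S"
      then show "g xt / K \<le> g w" using main[of w] Kp by (simp add: divide_le_eq mult.commute)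
    qed
    then show ?thesis using Kp by (simp add: divide_le_eq mult.commute)
  qed
  then show ?thesis unfolding g_def K_def num_def den_def .
qed

end
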